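(* Let $\epsilon\in(0,0.01)$. There is a constant $c$ such that for all integers $k,m$ with $m\ge(\tfrac{1}{32\epsilon^2}-1)k\ge0$ and $k+m>0$, setting $\gamma=k+m$ and $$\xi_{k,m}(z)=\Big(\frac{1}{k!}\Big)^{1/2}\Big(\frac{\gamma}{2}\Big)^{\frac{k+1}{2}}\frac{z^k}{\sqrt\pi}\exp\Big(-\frac{\gamma}{4}|z|^2\Big),\qquad z\in\mathbb C,$$ one has $|\xi_{k,m}(z)|^2\le c\exp(-\tfrac{\gamma}{c}|z|^2)$ for every $z$ with $|z|\ge 9\epsilon$. *)

theory Defs
  imports Complex_Main
begin

definition xi :: "int \<Rightarrow> int \<Rightarrow> complex \<Rightarrow> complex" where
  "xi k m z = (let \<gamma> = real_of_int (k + m) in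
     complex_of_real (sqrt (1 / fact (nat k)) * (\<gamma> / 2) powr ((real_of_int k + 1) / 2)
        / sqrt pi * exp (- (\<gamma> / 4) * (cmod z)^2)) * z ^ (nat k))"

end

theory Submission imports Defs begin
lemma exp_term: "0 \<le> (x::real) \<Longrightarrow> x^n / fact n \<le> exp x"
proof -
  assume x: "0 \<le> x"
  have s: "(\<lambda>n. x^n /\<^sub>R fact n) sums exp x" by (rule exp_converges)
  have "sum (\<lambda>n. x^n /\<^sub>R fact n) {n} \<le> suminf (\<lambda>n. x^n /\<^sub>R fact n)"
    by (rule sum_le_suminf) (use s x in \<open>auto simp: sums_iff\<close>)
  then show ?thesis using s by (simp add: sums_iff divide_inverse mult.commute)
qed

lemma tn_bound: "0 \<le> (t::real) \<Longrightarrow> t^n / fact n \<le> exp (9*t/10 + real n / 9)"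
proof -
  assume t: "0 \<le> t"
  have a: "(9*t/10)^n / fact n \<le> exp (9*t/10)" by (rule exp_term) (use t in simp)
  have b: "t^n = (10/9)^n * (9*t/10)^n" by (simp add: power_mult_distrib[symmetric])
  have c: "(10/9::real)^n \<le> exp (1/9)^n"
    using exp_ge_add_one_self[of "1/9::real"] by (intro power_mono) auto
  have "t^n / fact n = (10/9)^n * ((9*t/10)^n / fact n)" by (simp add: b)
  also have "\<dots> \<le> exp (1/9)^n * exp (9*t/10)"
    by (rule mult_mono[OF c a]) (auto simp: t)
  also have "\<dots> = exp (9*t/10 + real n / 9)"
    by (simp add: exp_add exp_of_nat_mult[symmetric] mult.commute)
  finally show ?thesis .
qed

lemma core:
  fixes e g r :: real and n :: nat
  assumes e: "0 < e" "e < 0.01" and g: "0 < g" and r: "9*e \<le> r" and n: "real n \<le> 32*e^2*g"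
  shows "(1/fact n) * (g/2)^(n+1) / pi * exp (-(g/2) * r^2) * r^(2*n) \<le> (1/e^2) * exp (- (e^2 * g) * r^2)"
proof -
  define t where "t = g * r^2 / 2"
  define u where "u = g * r^2"
  have r0: "0 \<le> r" using r e by linarith
  have t0: "0 \<le> t" using g by (simp add: t_def)
  have e2r: "81 * e^2 \<le> r^2"
  proof -
    have "(9*e)^2 \<le> r^2" using r e by (intro power_mono) auto
    then show ?thesis by (simp add: power_mult_distrib)
  qed
  have "(1/fact n) * (g/2)^(n+1) / pi * exp (-(g/2) * r^2) * r^(2*n)
      = (g/2) / pi * (t^n / fact n) * exp (-t)"
    by (simp add: t_def power_mult_distrib power_mult power2_eq_square field_simps)
  also have "\<dots> \<le> (g/2) / pi * exp (9*t/10 + real n / 9) * exp (-t)"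
    using tn_bound[OF t0, of n] g by (intro mult_right_mono mult_left_mono) auto
  also have "\<dots> = (g/2) / pi * exp (real n / 9 - t/10)"
    by (simp add: exp_add[symmetric] algebra_simps)
  also have "\<dots> \<le> (g/2) / pi * exp (- u/200)"
  proof -
    have "e^2 * g * 81 \<le> r^2 * g" using mult_right_mono[OF e2r, of g] g by (simp add: mult_ac)
    then have "real n / 9 \<le> 32 * u / 729" using n by (simp add: u_def algebra_simps)
    moreover have "0 \<le> u" using g by (simp add: u_def)
    ultimately have "real n / 9 - t/10 \<le> - u/200" by (simp add: t_def u_def)
    then show ?thesis using g by (intro mult_left_mono) auto
  qed
  also have "\<dots> \<le> (1/e^2) * exp (u/300) * exp (-u/200)"
  proof -
    have "g/2/pi \<le> g/4" using pi_ge_two g by (simp add: field_simps)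
    also have "\<dots> = (300/(324*e^2)) * (81*e^2*g/300)" using e by (simp add: field_simps)
    also have "\<dots> \<le> (1/e^2) * exp (81*e^2*g/300)"
    proof (rule mult_mono)
      show "300/(324*e^2) \<le> 1/e^2" using e by (simp add: field_simps)
      show "81*e^2*g/300 \<le> exp (81*e^2*g/300)"
        using exp_ge_add_one_self[of "81*e^2*g/300"] by linarith
    qed (use e g in auto)
    also have "\<dots> \<le> (1/e^2) * exp (u/300)"
    proof -
      have "81*e^2*g \<le> u" using mult_right_mono[OF e2r, of g] g by (simp add: u_def mult.commute)
      then show ?thesis using e by (intro mult_left_mono) (auto simp: mult_ac)
    qed
    finally show ?thesis by (intro mult_right_mono) auto
  qed
  also have "\<dots> = (1/e^2) * exp (-u/600)" by (simp add: exp_add[symmetric])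
  also have "\<dots> \<le> (1/e^2) * exp (- (e^2 * g) * r^2)"
  proof -
    have "e*e \<le> e*(1/100)" using e by (intro mult_left_mono) auto
    moreover have "e < 1/100" using e(2) by simp
    ultimately have "e^2 \<le> 1/600" unfolding power2_eq_square using e by linarith
    moreover have "0 \<le> u" using g by (simp add: u_def)
    ultimately have "e^2 * u \<le> (1/600) * u" by (intro mult_right_mono)
    then have "- u/600 \<le> - (e^2 * g) * r^2" by (simp add: u_def mult_ac)
    then show ?thesis using e by (intro mult_left_mono) auto
  qed
  finally show ?thesis .
qed
lemma xi_sq:
  fixes k m :: int
  assumes k: "0 \<le> k" and g: "0 < k + m"
  shows "(cmod (xi k m z))^2 = (1/fact (nat k)) * (real_of_int (k+m)/2)^(nat k+1) / pi
     * exp (-(real_of_int (k+m)/2) * (cmod z)^2) * (cmod z)^(2*nat k)"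
proof -
  define g where "g = real_of_int (k+m)"
  have g0: "0 < g" using g by (simp add: g_def)
  have p: "((g/2) powr ((real_of_int k + 1)/2))^2 = (g/2)^(nat k+1)"
  proof -
    have "((g/2) powr ((real_of_int k + 1)/2))^2 = (g/2) powr (real (nat k + 1))"
      using g0 k by (simp add: powr_powr[symmetric] power2_eq_square powr_add[symmetric] add.commute)
    also have "\<dots> = (g/2)^(nat k+1)" using g0 by (intro powr_realpow) simp
    finally show ?thesis .
  qed
  have e: "(exp (- (g / 4) * (cmod z)^2))^2 = exp (-(g/2) * (cmod z)^2)"
    by (simp add: exp_double[symmetric] power2_eq_square exp_add[symmetric])
  have "(cmod (xi k m z))^2 = (sqrt (1 / fact (nat k)) * (g / 2) powr ((real_of_int k + 1) / 2)
        / sqrt pi * exp (- (g / 4) * (cmod z)^2))^2 * (cmod z ^ nat k)^2"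
  proof -
    have "xi k m z = complex_of_real (sqrt (1 / fact (nat k)) * (g / 2) powr ((real_of_int k + 1) / 2)
        / sqrt pi * exp (- (g / 4) * (cmod z)^2)) * z ^ nat k" by (simp add: xi_def g_def Let_def)
    then show ?thesis by (simp only: norm_mult norm_power norm_of_real power_mult_distrib power2_abs)
  qed
  also have "\<dots> = (1/fact (nat k)) * (g/2)^(nat k+1) / pi
     * exp (-(g/2) * (cmod z)^2) * (cmod z)^(2*nat k)"
    unfolding power_mult_distrib power_divide p e
    by (simp add: power_mult[symmetric] mult.commute)
  finally show ?thesis by (simp add: g_def)
qed

theorem lemma5p9:
  fixes \<epsilon> :: real
  assumes "0 < \<epsilon>" and "\<epsilon> < 0.01"
  shows "\<exists>c::real. c > 0 \<and>
    (\<forall>k m :: int. real_of_int m \<ge> (1 / (32 * \<epsilon>^2) - 1) * real_of_int k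
        \<and> (1 / (32 * \<epsilon>^2) - 1) * real_of_int k \<ge> 0 \<and> k + m > 0 \<longrightarrow>
      (\<forall>z::complex. cmod z \<ge> 9 * \<epsilon> \<longrightarrow>
         (cmod (xi k m z))^2 \<le> c * exp (- (real_of_int (k + m) / c) * (cmod z)^2)))"
proof (intro exI[of _ "1/\<epsilon>^2"] conjI allI impI)
  show "0 < 1/\<epsilon>^2" using assms by simp
  fix k m :: int and z :: complex
  assume h: "real_of_int m \<ge> (1 / (32 * \<epsilon>^2) - 1) * real_of_int k
        \<and> (1 / (32 * \<epsilon>^2) - 1) * real_of_int k \<ge> 0 \<and> k + m > 0"
    and z: "cmod z \<ge> 9 * \<epsilon>"
  define A where "A = 1 / (32 * \<epsilon>^2) - 1"
  have e2: "\<epsilon>^2 < 1/10000"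
  proof -
    have "\<epsilon>*\<epsilon> \<le> \<epsilon>*(1/100)" using assms by (intro mult_left_mono) auto
    moreover have "\<epsilon> < 1/100" using assms(2) by simp
    ultimately show ?thesis unfolding power2_eq_square using assms by linarith
  qed
  have A0: "A > 0" using e2 assms by (simp add: A_def field_simps)
  have k0: "0 \<le> k" using h A0 unfolding A_def[symmetric] by (simp add: zero_le_mult_iff)
  have g0: "0 < real_of_int (k+m)" using h by simp
  have nk: "real (nat k) \<le> 32*\<epsilon>^2*real_of_int (k+m)"
  proof -
    have "(A+1) * real_of_int k \<le> real_of_int (k+m)" using h by (simp add: A_def algebra_simps)
    moreover have "A + 1 = 1/(32*\<epsilon>^2)" by (simp add: A_def)
    ultimately have "real_of_int k / (32*\<epsilon>^2) \<le> real_of_int (k+m)" by simp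
    then show ?thesis using k0 assms by (simp add: field_simps)
  qed
  have "(cmod (xi k m z))^2 \<le> (1/\<epsilon>^2) * exp (- (\<epsilon>^2 * real_of_int (k+m)) * (cmod z)^2)"
    unfolding xi_sq[OF k0 conjunct2[OF conjunct2[OF h]]]
    by (rule core[OF assms g0 z nk])
  then show "(cmod (xi k m z))^2 \<le> (1/\<epsilon>^2) * exp (- (real_of_int (k + m) / (1/\<epsilon>^2)) * (cmod z)^2)"
    by (simp add: mult_ac)
qed
end
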